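(* Let $A\in\mathbb{R}^{n\times d}$, $k\ge1$, and suppose $\lambda:=\|A-A_k\|_F^2/k>0$. Let $C_1\in\mathbb{R}^{n\times d'}$ and $c_1>0$ satisfy $AA^T+\lambda I_n\preceq c_1\,(C_1C_1^T+\lambda I_n)$, and let $Z$ be a matrix with orthonormal columns spanning the column space of $C_1$. Then for every $i=1,\dots,d$, $$\|a_i-ZZ^Ta_i\|_2^2\le c_1\,\lambda\,\bar\tau_i(A).$$
   Context: $A$ has columns $a_1,\dots,a_d$. $A_k$ denotes a best rank-$k$ approximation of $A$ in Frobenius norm. $\preceq$ is the Loewner order and $M^+$ the Moore–Penrose pseudoinverse. The ridge leverage score is $\bar\tau_i(A)=a_i^T\big(AA^T+\frac{\|A-A_k\|_F^2}{k}I_n\big)^+a_i$. *)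

theory Defs
  imports "Jordan_Normal_Form.DL_Rank"
begin

definition frob_norm :: "real mat \<Rightarrow> real" where
  "frob_norm M = sqrt (\<Sum>i<dim_row M. \<Sum>j<dim_col M. (M $$ (i,j))^2)"

definition vec_norm :: "real vec \<Rightarrow> real" where
  "vec_norm v = sqrt (v \<bullet> v)"

definition mat_rank :: "real mat \<Rightarrow> nat" where
  "mat_rank M = vec_space.rank (dim_row M) M"

definition best_rank_approx :: "real mat \<Rightarrow> nat \<Rightarrow> real mat \<Rightarrow> bool" where
  "best_rank_approx A k B \<longleftrightarrow>
     B \<in> carrier_mat (dim_row A) (dim_col A) \<and> mat_rank B \<le> k \<and>
     (\<forall>B' \<in> carrier_mat (dim_row A) (dim_col A).
        mat_rank B' \<le> k \<longrightarrow> frob_norm (A - B) \<le> frob_norm (A - B'))"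

definition loewner_le :: "nat \<Rightarrow> real mat \<Rightarrow> real mat \<Rightarrow> bool" where
  "loewner_le n P Q \<longleftrightarrow> P \<in> carrier_mat n n \<and> Q \<in> carrier_mat n n \<and>
     (\<forall>x \<in> carrier_vec n. x \<bullet> ((Q - P) *\<^sub>v x) \<ge> 0)"

definition pinv :: "real mat \<Rightarrow> real mat" where
  "pinv M = (THE X. X \<in> carrier_mat (dim_col M) (dim_row M) \<and>
      M * X * M = M \<and> X * M * X = X \<and> (M * X)\<^sup>T = M * X \<and> (X * M)\<^sup>T = X * M)"

definition col_space :: "real mat \<Rightarrow> real vec set" where
  "col_space M = {M *\<^sub>v x | x. x \<in> carrier_vec (dim_col M)}"

definition ridge_lev :: "real mat \<Rightarrow> real mat \<Rightarrow> nat \<Rightarrow> nat \<Rightarrow> real" where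
  "ridge_lev A Ak k i =
     col A i \<bullet> (pinv (A * A\<^sup>T + ((frob_norm (A - Ak))^2 / real k) \<cdot>\<^sub>m 1\<^sub>m (dim_row A))
                 *\<^sub>v col A i)"

end

theory Submission
  imports Defs
begin

lemma smult_mat_vec_h:
  assumes "(A::real mat) \<in> carrier_mat nr nc" "v \<in> carrier_vec nc"
  shows "(c \<cdot>\<^sub>m A) *\<^sub>v v = c \<cdot>\<^sub>v (A *\<^sub>v v)"
  using assms by (intro eq_vecI) auto

lemma self_ge0: "0 \<le> (v::real vec) \<bullet> v"
  unfolding scalar_prod_def by (auto intro: sum_nonneg)

lemma self_zero:
  assumes "(v::real vec) \<bullet> v = 0" "v \<in> carrier_vec n"
  shows "v = 0\<^sub>v n"
proof (rule eq_vecI)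
  show "dim_vec v = dim_vec (0\<^sub>v n)" using assms by auto
  fix i assume i: "i < dim_vec (0\<^sub>v n)"
  have "(\<Sum>j\<in>{0..<n}. v $ j * v $ j) = 0" using assms unfolding scalar_prod_def by auto
  hence "\<forall>j\<in>{0..<n}. v $ j * v $ j = 0"
    by (subst (asm) sum_nonneg_eq_0_iff) auto
  thus "v $ i = 0\<^sub>v n $ i" using i by auto
qed

theorem mainTheorem5:
  fixes A Ak C1 Z :: "real mat" and n d d' m k :: nat and c1 lam :: real
  assumes "A \<in> carrier_mat n d"
    and "k \<ge> 1"
    and "best_rank_approx A k Ak"
    and "lam = (frob_norm (A - Ak))^2 / real k"
    and "lam > 0"
    and "C1 \<in> carrier_mat n d'"
    and "c1 > 0"
    and "loewner_le n (A * A\<^sup>T + lam \<cdot>\<^sub>m 1\<^sub>m n) (c1 \<cdot>\<^sub>m (C1 * C1\<^sup>T + lam \<cdot>\<^sub>m 1\<^sub>m n))"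
    and "Z \<in> carrier_mat n m"
    and "Z\<^sup>T * Z = 1\<^sub>m m"
    and "col_space Z = col_space C1"
    and "i < d"
  shows "(vec_norm (col A i - (Z * Z\<^sup>T) *\<^sub>v col A i))^2 \<le> c1 * lam * ridge_lev A Ak k i"
proof -
  note A = assms(1) and C1 = assms(6) and Z = assms(9)
  define M where "M = A * A\<^sup>T + lam \<cdot>\<^sub>m 1\<^sub>m n"
  define N where "N = C1 * C1\<^sup>T + lam \<cdot>\<^sub>m 1\<^sub>m n"
  have AT: "A\<^sup>T \<in> carrier_mat d n" using A by auto
  have ZT: "Z\<^sup>T \<in> carrier_mat m n" using Z by auto
  have C1T: "C1\<^sup>T \<in> carrier_mat d' n" using C1 by auto
  have Mc: "M \<in> carrier_mat n n" unfolding M_def using A by auto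
  have Nc: "N \<in> carrier_mat n n" unfolding N_def using C1 by auto
  have MT: "M\<^sup>T = M"
  proof -
    have "(lam \<cdot>\<^sub>m 1\<^sub>m n)\<^sup>T = lam \<cdot>\<^sub>m 1\<^sub>m n" by (intro eq_matI) auto
    thus ?thesis using A by (simp add: M_def transpose_add[of _ n n] transpose_mult[of _ n d])
  qed
  have Mv: "M *\<^sub>v x = A *\<^sub>v (A\<^sup>T *\<^sub>v x) + lam \<cdot>\<^sub>v x" if x: "x \<in> carrier_vec n" for x
    unfolding M_def using A x
    by (simp add: add_mult_distrib_mat_vec[of _ n n] smult_mat_vec_h[of _ n n])
  have quadM: "x \<bullet> (M *\<^sub>v x) = (A\<^sup>T *\<^sub>v x) \<bullet> (A\<^sup>T *\<^sub>v x) + lam * (x \<bullet> x)"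
    if x: "x \<in> carrier_vec n" for x
  proof -
    have "x \<bullet> (M *\<^sub>v x) = x \<bullet> (A *\<^sub>v (A\<^sup>T *\<^sub>v x)) + x \<bullet> (lam \<cdot>\<^sub>v x)"
      using Mv[OF x] x A by (simp add: scalar_prod_add_distrib[of _ n])
    also have "x \<bullet> (A *\<^sub>v (A\<^sup>T *\<^sub>v x)) = (A\<^sup>T *\<^sub>v x) \<bullet> (A\<^sup>T *\<^sub>v x)"
      using transpose_vec_mult_scalar[OF A _ x, of "A\<^sup>T *\<^sub>v x"] x A by auto
    finally show ?thesis using x by simp
  qed
  have Mpsd: "0 \<le> x \<bullet> (M *\<^sub>v x)" if x: "x \<in> carrier_vec n" for x
    using quadM[OF x] self_ge0[of x] self_ge0[of "A\<^sup>T *\<^sub>v x"] assms(5) by simp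
  have "det M \<noteq> 0"
  proof
    assume "det M = 0"
    then obtain v where v: "v \<in> carrier_vec n" "v \<noteq> 0\<^sub>v n" "M *\<^sub>v v = 0\<^sub>v n"
      using det_0_iff_vec_prod_zero[OF Mc] by auto
    have "0 = v \<bullet> (M *\<^sub>v v)" using v by simp
    also have "\<dots> = (A\<^sup>T *\<^sub>v v) \<bullet> (A\<^sup>T *\<^sub>v v) + lam * (v \<bullet> v)" by (rule quadM[OF v(1)])
    finally have "v \<bullet> v = 0"
      using self_ge0[of v] self_ge0[of "A\<^sup>T *\<^sub>v v"] assms(5)
      by (smt (verit) mult_pos_pos)
    thus False using self_zero[OF _ v(1)] v(2) by auto
  qed
  then have "M \<in> Units (ring_mat TYPE(real) n ())"
    by (rule det_non_zero_imp_unit[OF Mc])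
  then obtain B where Bc: "B \<in> carrier_mat n n" and BM: "B * M = 1\<^sub>m n" and MB: "M * B = 1\<^sub>m n"
    unfolding Units_def by (auto simp: ring_mat_simps)
  have pinvM: "pinv M = B"
    unfolding pinv_def
  proof (rule the_equality)
    show "B \<in> carrier_mat (dim_col M) (dim_row M) \<and> M * B * M = M \<and> B * M * B = B \<and>
        (M * B)\<^sup>T = M * B \<and> (B * M)\<^sup>T = B * M"
      using Mc Bc MB BM by auto
    fix X assume X: "X \<in> carrier_mat (dim_col M) (dim_row M) \<and> M * X * M = M \<and> X * M * X = X \<and>
        (M * X)\<^sup>T = M * X \<and> (X * M)\<^sup>T = X * M"
    hence Xc: "X \<in> carrier_mat n n" using Mc by auto
    have "B * (M * X * M) * B = B * M * B" using X by simp
    also have "\<dots> = B" using BM Bc by simp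
    also have "B * (M * X * M) * B = (B * M) * X * (M * B)"
      using Bc Mc Xc by (simp add: assoc_mult_mat[of _ n n _ n _ n])
    also have "\<dots> = X" using BM MB Xc by simp
    finally show "X = B" .
  qed
  define a where "a = col A i"
  have ac: "a \<in> carrier_vec n" unfolding a_def using A assms(12) by auto
  define w where "w = B *\<^sub>v a"
  have wc: "w \<in> carrier_vec n" unfolding w_def using Bc ac by auto
  have Mw: "M *\<^sub>v w = a" unfolding w_def
    using Mc Bc ac MB by (simp flip: assoc_mult_mat_vec)
  have ridge: "ridge_lev A Ak k i = a \<bullet> w"
    unfolding ridge_lev_def a_def[symmetric] w_def pinvM[symmetric] M_def assms(4)[symmetric]
    using A by simp
  define za where "za = Z\<^sup>T *\<^sub>v a"
  have zac: "za \<in> carrier_vec m" unfolding za_def using Z ac by auto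
  define y where "y = a - Z *\<^sub>v za"
  have yc: "y \<in> carrier_vec n" unfolding y_def using Z ac zac by auto
  have yeq: "col A i - (Z * Z\<^sup>T) *\<^sub>v col A i = y"
    unfolding y_def za_def a_def[symmetric] using Z ZT ac by simp
  have ZTy: "Z\<^sup>T *\<^sub>v y = 0\<^sub>v m"
  proof -
    have "Z\<^sup>T *\<^sub>v y = za - Z\<^sup>T *\<^sub>v (Z *\<^sub>v za)"
      unfolding y_def za_def using ZT Z ac zac by (simp add: mult_minus_distrib_mat_vec[of _ m n])
    also have "Z\<^sup>T *\<^sub>v (Z *\<^sub>v za) = za"
      using ZT Z zac assms(10) by (simp flip: assoc_mult_mat_vec)
    finally show ?thesis using zac by simp
  qed
  have perp: "y \<bullet> (Z *\<^sub>v v) = 0" if v: "v \<in> carrier_vec m" for v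
    using transpose_vec_mult_scalar[OF Z v yc] ZTy v by simp
  have ya: "y \<bullet> a = y \<bullet> y"
  proof -
    have "a = y + Z *\<^sub>v za" unfolding y_def using ac Z zac by auto
    hence "y \<bullet> a = y \<bullet> (y + Z *\<^sub>v za)" by simp
    also have "\<dots> = y \<bullet> y + y \<bullet> (Z *\<^sub>v za)"
      using yc Z zac by (simp add: scalar_prod_add_distrib[of _ n])
    finally show ?thesis using perp[OF zac] by simp
  qed
  have C1Ty: "C1\<^sup>T *\<^sub>v y = 0\<^sub>v d'"
  proof (rule eq_vecI)
    show "dim_vec (C1\<^sup>T *\<^sub>v y) = dim_vec (0\<^sub>v d')" using C1 by simp
    fix j assume "j < dim_vec (0\<^sub>v d')"
    hence j: "j < d'" by simp
    have ej: "unit_vec d' j \<in> carrier_vec d'" by simp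
    have "C1 *\<^sub>v unit_vec d' j \<in> col_space C1" unfolding col_space_def using C1 ej by auto
    then obtain x where x: "x \<in> carrier_vec m" "C1 *\<^sub>v unit_vec d' j = Z *\<^sub>v x"
      using assms(11) Z unfolding col_space_def by auto
    have "(C1\<^sup>T *\<^sub>v y) $ j = (C1\<^sup>T *\<^sub>v y) \<bullet> unit_vec d' j"
      using C1T yc j by simp
    also have "\<dots> = y \<bullet> (C1 *\<^sub>v unit_vec d' j)"
      using transpose_vec_mult_scalar[OF C1 ej yc] .
    also have "\<dots> = 0" using x perp by simp
    finally show "(C1\<^sup>T *\<^sub>v y) $ j = 0\<^sub>v d' $ j" using j by simp
  qed
  have yN: "y \<bullet> (N *\<^sub>v y) = lam * (y \<bullet> y)"
  proof -
    have "N *\<^sub>v y = C1 *\<^sub>v (C1\<^sup>T *\<^sub>v y) + lam \<cdot>\<^sub>v y"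
      unfolding N_def using C1 yc
      by (simp add: add_mult_distrib_mat_vec[of _ n n] smult_mat_vec_h[of _ n n])
    also have "C1 *\<^sub>v (C1\<^sup>T *\<^sub>v y) = 0\<^sub>v n" unfolding C1Ty using C1
      by (intro eq_vecI) auto
    also have "0\<^sub>v n + lam \<cdot>\<^sub>v y = lam \<cdot>\<^sub>v y" using yc by simp
    finally show ?thesis using yc by simp
  qed
  have yM: "y \<bullet> (M *\<^sub>v y) \<le> c1 * lam * (y \<bullet> y)"
  proof -
    have "0 \<le> y \<bullet> ((c1 \<cdot>\<^sub>m N - M) *\<^sub>v y)"
      using assms(8) yc unfolding loewner_le_def M_def N_def by auto
    also have "(c1 \<cdot>\<^sub>m N - M) *\<^sub>v y = c1 \<cdot>\<^sub>v (N *\<^sub>v y) - M *\<^sub>v y"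
      using Nc Mc yc by (simp add: minus_mult_distrib_mat_vec[of _ n n] smult_mat_vec_h[of _ n n])
    also have "y \<bullet> \<dots> = c1 * (y \<bullet> (N *\<^sub>v y)) - y \<bullet> (M *\<^sub>v y)"
      using Nc Mc yc by (simp add: scalar_prod_minus_distrib[of _ n])
    finally show ?thesis using yN by simp
  qed
  define t where "t = 1 / (c1 * lam)"
  have tpos: "t > 0" unfolding t_def using assms(5,7) by simp
  have tc: "t * (c1 * lam) = 1" unfolding t_def using assms(5,7) by simp
  define u where "u = t \<cdot>\<^sub>v y - w"
  have uc: "u \<in> carrier_vec n" unfolding u_def using yc wc by auto
  have Mu: "M *\<^sub>v u = t \<cdot>\<^sub>v (M *\<^sub>v y) - a"
    unfolding u_def using Mc yc wc Mw
    by (simp add: mult_minus_distrib_mat_vec[of _ n n] mult_mat_vec[of _ n n])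
  have wMy: "w \<bullet> (M *\<^sub>v y) = y \<bullet> a"
    using transpose_vec_mult_scalar[OF Mc yc wc] MT Mw comm_scalar_prod[OF ac yc] by simp
  have My: "M *\<^sub>v y \<in> carrier_vec n" using Mc yc by simp
  have "u \<bullet> (M *\<^sub>v u) = (t \<cdot>\<^sub>v y - w) \<bullet> (t \<cdot>\<^sub>v (M *\<^sub>v y) - a)"
    unfolding Mu unfolding u_def ..
  also have "\<dots> = (t \<cdot>\<^sub>v y) \<bullet> (t \<cdot>\<^sub>v (M *\<^sub>v y) - a) - w \<bullet> (t \<cdot>\<^sub>v (M *\<^sub>v y) - a)"
    using yc wc ac My by (simp add: minus_scalar_prod_distrib[of _ n])
  also have "\<dots> = t * t * (y \<bullet> (M *\<^sub>v y)) - t * (y \<bullet> a) - t * (w \<bullet> (M *\<^sub>v y)) + w \<bullet> a"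
    using yc wc ac My by (simp add: scalar_prod_minus_distrib[of _ n] algebra_simps)
  finally have "u \<bullet> (M *\<^sub>v u) = t * t * (y \<bullet> (M *\<^sub>v y)) - t * (y \<bullet> a) - t * (w \<bullet> (M *\<^sub>v y)) + w \<bullet> a" .
  hence "0 \<le> t * t * (y \<bullet> (M *\<^sub>v y)) - 2 * t * (y \<bullet> y) + w \<bullet> a"
    using Mpsd[OF uc] wMy ya by simp
  moreover have "t * t * (y \<bullet> (M *\<^sub>v y)) \<le> t * t * (c1 * lam * (y \<bullet> y))"
    using yM tpos by (simp add: mult_left_mono)
  moreover have "t * t * (c1 * lam * (y \<bullet> y)) = t * (y \<bullet> y)"
    using tc by (simp add: algebra_simps)
  ultimately have "t * (y \<bullet> y) \<le> w \<bullet> a" by linarith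
  hence "(c1 * lam) * (t * (y \<bullet> y)) \<le> (c1 * lam) * (w \<bullet> a)"
    using assms(5,7) by (simp add: mult_left_mono)
  moreover have "(c1 * lam) * (t * (y \<bullet> y)) = y \<bullet> y" using tc
    by (metis mult.assoc mult.commute mult_1)
  ultimately have yy: "y \<bullet> y \<le> c1 * lam * (w \<bullet> a)" by simp
  have "(vec_norm y)^2 = y \<bullet> y" unfolding vec_norm_def using self_ge0[of y] by simp
  thus ?thesis using yy yeq ridge comm_scalar_prod[OF wc ac] by simp
qed
end
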